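(* Assume $x(0)=x'(0)=0$. If $x(t)\to0$ as $t\to\infty$, then $y_2(t)\to0$ as $t\to\infty$.
   Context: Standing assumptions: $\omega>0$ is a constant; $p\in C^1([0,\infty))$ with $p(t)>0$ and $p'(t)<0$ for all $t\ge0$, $\int_0^\infty p(t)\,dt=\infty$ and $\int_0^\infty p(t)^2\,dt<\infty$; $f\in L^1_{\mathrm{loc}}([0,\infty))$. $x$ denotes the solution of $x''(t)+p(t)x'(t)+\omega^2x(t)=f(t)$, $t\ge0$. Notation: $y_1(t)=\int_0^te^{-\omega^2(t-s)}f(s)\,ds$; $y_2(t)=\int_0^te^{-\omega^2(t-s)}y_1(s)\,ds=\int_0^t(t-s)e^{-\omega^2(t-s)}f(s)\,ds$ (the solution of $y_2'=-\omega^2y_2+y_1$, $y_2(0)=0$). *)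

theory Defs
  imports "HOL-Analysis.Analysis"
begin

definition y1 :: "real \<Rightarrow> (real \<Rightarrow> real) \<Rightarrow> real \<Rightarrow> real" where
  "y1 \<omega> f t = integral {0..t} (\<lambda>s. exp (-(\<omega>\<^sup>2) * (t - s)) * f s)"

definition y2 :: "real \<Rightarrow> (real \<Rightarrow> real) \<Rightarrow> real \<Rightarrow> real" where
  "y2 \<omega> f t = integral {0..t} (\<lambda>s. (t - s) * exp (-(\<omega>\<^sup>2) * (t - s)) * f s)"

end

theory Submission
  imports Defs
begin


lemma fub:
  fixes g \<phi> :: "real \<Rightarrow> real"
  assumes g: "g absolutely_integrable_on {0..t}" and phi: "continuous_on UNIV \<phi>" and t: "0 \<le> t"
  shows "((\<lambda>s. g s * integral {s..t} \<phi>) has_integral integral {0..t} (\<lambda>u. \<phi> u * integral {0..u} g)) {0..t}"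
proof -
  have gm: "(\<lambda>x. indicator {0..t} x * g x) \<in> borel_measurable (completion lborel)"
    using g unfolding set_integrable_def by (auto dest: borel_measurable_integrable)
  obtain g0 where g0m[measurable]: "g0 \<in> borel_measurable lborel"
    and g0ae: "AE x in lborel. indicator {0..t} x * g x = g0 x"
    using completion_ex_borel_measurable_real[OF gm] by blast
  define g1 where "g1 x = indicator {0..t} x * g0 x" for x
  have g1m[measurable]: "g1 \<in> borel_measurable lborel" unfolding g1_def by measurable
  have g1ae: "AE x in lborel. indicator {0..t} x * g x = g1 x"
    using g0ae by eventually_elim (auto simp: g1_def indicator_def of_bool_def split: if_splits)
  then have "AE x in lebesgue. indicator {0..t} x * g x = g1 x"
    by (rule AE_completion)
  then obtain N where N: "negligible N" "{x. \<not> (indicator {0..t} x * g x = g1 x)} \<subseteq> N"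
    unfolding eventually_ae_filter_negligible by blast
  have eqN: "g x = g1 x" if "x \<in> {0..t}" "x \<notin> N" for x
  proof -
    have "indicator {0..t} x * g x = g1 x" using N that by blast
    then show ?thesis using that by simp
  qed
  have g1int: "integrable lborel g1"
  proof -
    have "integrable lebesgue (\<lambda>x. indicator {0..t} x * g x)"
      using g unfolding set_integrable_def by simp
    then have "integrable lebesgue g1"
      using integrable_cong_AE[of "\<lambda>x. indicator {0..t} x * g x" lebesgue g1] gm
        \<open>AE x in lebesgue. indicator {0..t} x * g x = g1 x\<close> g1m
      by (simp add: measurable_completion)
    then show ?thesis using integrable_completion[OF g1m] by simp
  qed

  have phim[measurable]: "\<phi> \<in> borel_measurable borel"
    using phi by (rule borel_measurable_continuous_onI)
  obtain Cp where Cp: "Cp > 0" "\<And>u. u \<in> {0..t} \<Longrightarrow> \<bar>\<phi> u\<bar> \<le> Cp"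
  proof -
    have "bounded (\<phi> ` {0..t})"
      by (intro compact_imp_bounded compact_continuous_image continuous_on_subset[OF phi]) auto
    then show ?thesis using that by (auto simp: bounded_pos)
  qed
  define F where "F s u = g1 s * (indicator {0..t} u * (if s \<le> u then \<phi> u else 0))" for s u :: real
  have Fm[measurable]: "(\<lambda>(s,u). F s u) \<in> borel_measurable (lborel \<Otimes>\<^sub>M lborel)"
    unfolding F_def by measurable
  define Bd where "Bd s u = \<bar>g1 s\<bar> * (Cp * indicator {0..t} u)" for s u :: real
  have Bdint: "integrable (lborel \<Otimes>\<^sub>M lborel) (\<lambda>(s,u). Bd s u)"
  proof (rule lborel_pair.Fubini_integrable)
    show "(\<lambda>(s,u). Bd s u) \<in> borel_measurable (lborel \<Otimes>\<^sub>M lborel)"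
      unfolding Bd_def by measurable
    have "(\<lambda>s. \<integral>u. norm (case (s, u) of (s, u) \<Rightarrow> Bd s u) \<partial>lborel) = (\<lambda>s. \<bar>g1 s\<bar> * (Cp * t))"
      using t Cp by (auto simp: Bd_def abs_mult)
    then show "integrable lborel (\<lambda>s. \<integral>u. norm (case (s, u) of (s, u) \<Rightarrow> Bd s u) \<partial>lborel)"
      using g1int by simp
    show "AE s in lborel. integrable lborel (\<lambda>u. case (s, u) of (s, u) \<Rightarrow> Bd s u)"
      using borel_integrable_compact[of "{0..t}" "\<lambda>_. 1::real"] by (auto simp: Bd_def)
  qed
  have Fint: "integrable (lborel \<Otimes>\<^sub>M lborel) (\<lambda>(s,u). F s u)"
  proof (rule Bochner_Integration.integrable_bound[OF Bdint Fm])
    show "AE x in lborel \<Otimes>\<^sub>M lborel. norm (case x of (s, u) \<Rightarrow> F s u) \<le> norm (case x of (s, u) \<Rightarrow> Bd s u)"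
    proof (intro AE_I2, clarify)
      fix s u :: real
      have "\<bar>indicator {0..t} u * (if s \<le> u then \<phi> u else 0)\<bar> \<le> Cp * indicator {0..t} u"
        using Cp by (auto simp: indicator_def)
      then show "norm (F s u) \<le> norm (Bd s u)"
        unfolding F_def Bd_def using Cp
        by (auto simp: abs_mult intro!: mult_left_mono)
    qed
  qed
  have fubeq: "(\<integral>u. (\<integral>s. F s u \<partial>lborel) \<partial>lborel) = (\<integral>s. (\<integral>u. F s u \<partial>lborel) \<partial>lborel)"
    using lborel_pair.Fubini_integral[OF Fint] .
  have Gint: "g integrable_on {0..t}" using g set_lebesgue_integral_eq_integral(1) by blast
  have Gcont: "continuous_on {0..t} (\<lambda>u. integral {0..u} g)"
    by (rule indefinite_integral_continuous_1[OF Gint])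
  have inner_s: "(\<integral>s. F s u \<partial>lborel) = indicator {0..t} u *\<^sub>R (\<phi> u * integral {0..u} g)" for u
  proof (cases "u \<in> {0..t}")
    case True
    have "(\<lambda>s. F s u) = (\<lambda>s. \<phi> u * (indicator {0..u} s *\<^sub>R g1 s))"
      using True by (auto simp: F_def g1_def indicator_def fun_eq_iff)
    then have "(\<integral>s. F s u \<partial>lborel) = \<phi> u * (LINT s:{0..u}|lborel. g1 s)"
      by (simp add: set_lebesgue_integral_def)
    also have "(LINT s:{0..u}|lborel. g1 s) = integral {0..u} g1"
      using integrable_mult_indicator[OF _ g1int, of "{0..u}"]
      by (intro set_borel_integral_eq_integral(2)) (auto simp: set_integrable_def)
    also have "integral {0..u} g1 = integral {0..u} g"
      by (rule integral_spike[OF N(1)]) (use True eqN in auto)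
    finally show ?thesis using True by simp
  next
    case False
    then show ?thesis by (simp add: F_def)
  qed
  have inner_u: "(\<integral>u. F s u \<partial>lborel) = indicator {0..t} s *\<^sub>R (g1 s * integral {s..t} \<phi>)" for s
  proof (cases "s \<in> {0..t}")
    case True
    have "(\<lambda>u. F s u) = (\<lambda>u. g1 s * (indicator {s..t} u *\<^sub>R \<phi> u))"
      using True by (auto simp: F_def indicator_def fun_eq_iff)
    then have "(\<integral>u. F s u \<partial>lborel) = g1 s * (LINT u:{s..t}|lborel. \<phi> u)"
      by (simp add: set_lebesgue_integral_def)
    also have "(LINT u:{s..t}|lborel. \<phi> u) = integral {s..t} \<phi>"
      using borel_integrable_compact[of "{s..t}" \<phi>] continuous_on_subset[OF phi]
      by (intro set_borel_integral_eq_integral(2)) (auto simp: set_integrable_def)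
    finally show ?thesis using True by simp
  next
    case False
    then show ?thesis by (simp add: F_def g1_def)
  qed
  have lhs: "(\<integral>u. (\<integral>s. F s u \<partial>lborel) \<partial>lborel) = integral {0..t} (\<lambda>u. \<phi> u * integral {0..u} g)"
  proof -
    have "continuous_on {0..t} (\<lambda>u. \<phi> u * integral {0..u} g)"
      by (intro continuous_intros continuous_on_subset[OF phi] Gcont) auto
    from borel_integrable_compact[OF _ this] show ?thesis
      unfolding inner_s
      by (intro set_borel_integral_eq_integral(2)[unfolded set_lebesgue_integral_def])
         (auto simp: set_integrable_def)
  qed
  have i2: "integrable lborel (\<lambda>s. \<integral>u. F s u \<partial>lborel)"
    using lborel_pair.integrable_fst'[OF Fint] by simp
  then have si: "set_integrable lborel {0..t} (\<lambda>s. g1 s * integral {s..t} \<phi>)"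
    unfolding inner_u set_integrable_def .
  have rhs: "(\<integral>s. (\<integral>u. F s u \<partial>lborel) \<partial>lborel) = integral {0..t} (\<lambda>s. g1 s * integral {s..t} \<phi>)"
    unfolding inner_u using set_borel_integral_eq_integral(2)[OF si]
    by (simp add: set_lebesgue_integral_def)
  have "((\<lambda>s. g1 s * integral {s..t} \<phi>) has_integral integral {0..t} (\<lambda>u. \<phi> u * integral {0..u} g)) {0..t}"
    using set_borel_integral_eq_integral(1)[OF si] lhs rhs fubeq
    by (metis has_integral_integrable_integral)
  then show ?thesis
    by (rule has_integral_spike[OF N(1), rotated]) (use eqN in auto)
qed


definition Kf :: "real \<Rightarrow> real \<Rightarrow> real" where "Kf k u = u * exp (-k*u)"
definition K1f :: "real \<Rightarrow> real \<Rightarrow> real" where "K1f k u = (1 - k*u) * exp (-k*u)"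
definition K2f :: "real \<Rightarrow> real \<Rightarrow> real" where "K2f k u = (k^2*u - 2*k) * exp (-k*u)"
definition Wf :: "real \<Rightarrow> (real \<Rightarrow> real) \<Rightarrow> (real \<Rightarrow> real) \<Rightarrow> real \<Rightarrow> real \<Rightarrow> real" where
  "Wf k p p' t s = K2f k (t-s) + K1f k (t-s) * p s - Kf k (t-s) * p' s + k * Kf k (t-s)"

lemma Kf_deriv: "((\<lambda>u. Kf k (t-u)) has_real_derivative - K1f k (t-u)) (at u within S)"
  unfolding Kf_def K1f_def
  by (auto intro!: derivative_eq_intros simp: algebra_simps)

lemma K1f_deriv: "((\<lambda>u. K1f k (t-u)) has_real_derivative - K2f k (t-u)) (at u within S)"
  unfolding K2f_def K1f_def
  by (auto intro!: derivative_eq_intros simp: algebra_simps power2_eq_square)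

lemma cont_Kf[continuous_intros]: "continuous_on S (\<lambda>u. Kf k (t-u))"
  unfolding Kf_def by (intro continuous_intros)
lemma cont_K1f[continuous_intros]: "continuous_on S (\<lambda>u. K1f k (t-u))"
  unfolding K1f_def by (intro continuous_intros)
lemma cont_K2f[continuous_intros]: "continuous_on S (\<lambda>u. K2f k (t-u))"
  unfolding K2f_def by (intro continuous_intros)

lemma vd_within: "(f has_real_derivative f') (at u within S) \<Longrightarrow> (f has_vector_derivative f') (at u within S)"
  by (simp add: has_real_derivative_iff_has_vector_derivative)

lemma rep:
  fixes k t :: real and p p' f x x' :: "real \<Rightarrow> real"
  assumes t: "0 \<le> t"
    and pd: "\<And>s. s \<in> {0..t} \<Longrightarrow> (p has_real_derivative p' s) (at s within {0..t})"
    and p'c: "continuous_on {0..t} p'"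
    and xd: "\<And>s. s \<in> {0..t} \<Longrightarrow> (x has_real_derivative x' s) (at s within {0..t})"
    and x'c: "continuous_on {0..t} x'"
    and fi: "f absolutely_integrable_on {0..t}"
    and xe: "\<And>u. u \<in> {0..t} \<Longrightarrow> ((\<lambda>s. f s - p s * x' s - k * x s) has_integral x' u) {0..u}"
    and x0: "x 0 = 0"
  shows "((\<lambda>s. Kf k (t-s) * f s) has_integral x t + integral {0..t} (\<lambda>s. Wf k p p' t s * x s)) {0..t}"
proof -
  have pc: "continuous_on {0..t} p" by (rule DERIV_continuous_on[OF pd])
  have xc: "continuous_on {0..t} x" by (rule DERIV_continuous_on[OF xd])
  define g where "g s = f s - p s * x' s - k * x s" for s
  have gi: "g absolutely_integrable_on {0..t}"
  proof -
    have "(\<lambda>s. p s * x' s + k * x s) absolutely_integrable_on {0..t}"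
      by (intro absolutely_integrable_continuous_real continuous_intros pc xc x'c)
    from set_integral_diff(1)[OF fi this] show ?thesis
      unfolding g_def by (simp add: algebra_simps)
  qed
  have Gx: "integral {0..u} g = x' u" if "u \<in> {0..t}" for u
    using xe[OF that] unfolding g_def by (rule integral_unique)
  have Kint: "integral {s..t} (\<lambda>u. K1f k (t-u)) = Kf k (t-s)" if "s \<in> {0..t}" for s
  proof -
    have "((\<lambda>u. K1f k (t-u)) has_integral (- Kf k (t-t)) - (- Kf k (t-s))) {s..t}"
      using that
    proof (intro fundamental_theorem_of_calculus[of s t "\<lambda>u. - Kf k (t-u)" "\<lambda>u. K1f k (t-u)"] vd_within)
      fix u show "((\<lambda>u. - Kf k (t - u)) has_real_derivative K1f k (t - u)) (at u within {s..t})"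
        using Kf_deriv[of k t u "{s..t}"] DERIV_minus by fastforce
    qed auto
    then show ?thesis by (simp add: Kf_def integral_unique)
  qed
  have IG: "((\<lambda>s. Kf k (t-s) * g s) has_integral integral {0..t} (\<lambda>u. K1f k (t-u) * x' u)) {0..t}"
  proof -
    have h1: "((\<lambda>s. g s * integral {s..t} (\<lambda>u. K1f k (t-u))) has_integral
          integral {0..t} (\<lambda>u. K1f k (t-u) * integral {0..u} g)) {0..t}"
      by (rule fub[OF gi _ t]) (intro continuous_intros)
    have h2: "integral {0..t} (\<lambda>u. K1f k (t-u) * integral {0..u} g) = integral {0..t} (\<lambda>u. K1f k (t-u) * x' u)"
      by (rule integral_cong) (simp add: Gx)
    have eq: "\<And>s. s \<in> {0..t} \<Longrightarrow> g s * integral {s..t} (\<lambda>u. K1f k (t-u)) = Kf k (t-s) * g s"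
      using Kint by simp
    have "((\<lambda>s. Kf k (t-s) * g s) has_integral integral {0..t} (\<lambda>u. K1f k (t-u) * integral {0..u} g)) {0..t}"
      by (rule has_integral_eq[OF eq h1])
    then show ?thesis unfolding h2 .
  qed
  have I1: "((\<lambda>u. K1f k (t-u) * x' u - K2f k (t-u) * x u) has_integral x t) {0..t}"
  proof -
    have "((\<lambda>u. K1f k (t-u) * x' u - K2f k (t-u) * x u) has_integral K1f k (t-t) * x t - K1f k (t-0) * x 0) {0..t}"
    proof (rule fundamental_theorem_of_calculus[OF t, of "\<lambda>u. K1f k (t-u) * x u"], rule vd_within)
      fix u assume u: "u \<in> {0..t}"
      show "((\<lambda>u. K1f k (t-u) * x u) has_real_derivative K1f k (t-u) * x' u - K2f k (t-u) * x u) (at u within {0..t})"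
        by (rule DERIV_cong[OF DERIV_mult[OF K1f_deriv xd[OF u]]]) (simp add: algebra_simps)
    qed
    then show ?thesis using x0 by (simp add: K1f_def)
  qed
  have I2: "((\<lambda>s. Kf k (t-s) * p s * x' s - K1f k (t-s) * p s * x s + Kf k (t-s) * p' s * x s) has_integral 0) {0..t}"
  proof -
    have "((\<lambda>s. Kf k (t-s) * p s * x' s - K1f k (t-s) * p s * x s + Kf k (t-s) * p' s * x s) has_integral
          Kf k (t-t) * p t * x t - Kf k (t-0) * p 0 * x 0) {0..t}"
    proof (rule fundamental_theorem_of_calculus[OF t, of "\<lambda>u. Kf k (t-u) * p u * x u"], rule vd_within)
      fix u assume u: "u \<in> {0..t}"
      show "((\<lambda>u. Kf k (t-u) * p u * x u) has_real_derivative Kf k (t-u) * p u * x' u - K1f k (t-u) * p u * x u + Kf k (t-u) * p' u * x u) (at u within {0..t})"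
        by (rule DERIV_cong[OF DERIV_mult[OF DERIV_mult[OF Kf_deriv pd[OF u]] xd[OF u]]]) (simp add: algebra_simps)
    qed
    then show ?thesis using x0 by (simp add: Kf_def)
  qed
  have I3: "((\<lambda>s. Wf k p p' t s * x s) has_integral integral {0..t} (\<lambda>s. Wf k p p' t s * x s)) {0..t}"
    unfolding Wf_def
    by (intro integrable_integral integrable_continuous_real continuous_intros pc xc p'c)
  have I4: "((\<lambda>u. K2f k (t-u) * x u) has_integral integral {0..t} (\<lambda>u. K2f k (t-u) * x u)) {0..t}"
    by (intro integrable_integral integrable_continuous_real continuous_intros pc xc)
  have I5: "((\<lambda>u. K1f k (t-u) * x' u) has_integral integral {0..t} (\<lambda>u. K1f k (t-u) * x' u)) {0..t}"
    by (intro integrable_integral integrable_continuous_real continuous_intros x'c)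
  have A: "integral {0..t} (\<lambda>u. K1f k (t-u) * x' u) = x t + integral {0..t} (\<lambda>u. K2f k (t-u) * x u)"
  proof -
    have "((\<lambda>u. (K1f k (t-u) * x' u - K2f k (t-u) * x u) + K2f k (t-u) * x u) has_integral
       x t + integral {0..t} (\<lambda>u. K2f k (t-u) * x u)) {0..t}"
      by (rule has_integral_add[OF I1 I4])
    then show ?thesis using I5 by (simp add: has_integral_unique)
  qed
  have S: "((\<lambda>s. Kf k (t-s) * g s + (Kf k (t-s) * p s * x' s - K1f k (t-s) * p s * x s + Kf k (t-s) * p' s * x s)
        + Wf k p p' t s * x s - K2f k (t-s) * x s) has_integral
       integral {0..t} (\<lambda>u. K1f k (t-u) * x' u) + 0 + integral {0..t} (\<lambda>s. Wf k p p' t s * x s)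
       - integral {0..t} (\<lambda>u. K2f k (t-u) * x u)) {0..t}"
    by (intro has_integral_diff has_integral_add IG I2 I3 I4)
  have eq2: "\<And>s. s \<in> {0..t} \<Longrightarrow> Kf k (t-s) * g s + (Kf k (t-s) * p s * x' s - K1f k (t-s) * p s * x s + Kf k (t-s) * p' s * x s)
        + Wf k p p' t s * x s - K2f k (t-s) * x s = Kf k (t-s) * f s"
    by (simp add: g_def Wf_def algebra_simps)
  have "((\<lambda>s. Kf k (t-s) * f s) has_integral
       integral {0..t} (\<lambda>u. K1f k (t-u) * x' u) + 0 + integral {0..t} (\<lambda>s. Wf k p p' t s * x s)
       - integral {0..t} (\<lambda>u. K2f k (t-u) * x u)) {0..t}"
    by (rule has_integral_eq[OF eq2 S])
  then show ?thesis
    by (rule has_integral_eq_rhs) (simp add: A)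
qed



lemma ue_bound:
  fixes k u :: real assumes k: "k > 0" and u: "u \<ge> 0"
  shows "u * exp (-(k/2)*u) \<le> 2/k"
proof -
  have "exp ((k/2)*u) \<ge> 1 + (k/2)*u" by (rule exp_ge_add_one_self)
  then have "u \<le> (2/k) * exp ((k/2)*u)" using k by (simp add: field_simps)
  then have "u * exp (-(k/2)*u) \<le> (2/k) * exp ((k/2)*u) * exp (-(k/2)*u)"
    by (intro mult_right_mono) auto
  also have "\<dots> = 2/k" by (simp add: mult.assoc flip: exp_add)
  finally show ?thesis .
qed

lemma W_bound:
  fixes k Pm :: real and p p' :: "real \<Rightarrow> real"
  assumes k: "k > 0" and st: "s \<le> t" and ps: "0 < p s" "p s \<le> Pm" and p's: "p' s < 0"
  shows "\<bar>Wf k p p' t s\<bar> \<le> (4*k + 3*Pm + 2 + 2/k) * exp (-(k/2)*(t-s)) * (1 - p' s)"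
proof -
  define u where "u = t - s"
  define e where "e = exp (-(k/2)*u)"
  have u: "u \<ge> 0" using st by (simp add: u_def)
  have e0: "e > 0" by (simp add: e_def)
  have ku: "0 \<le> k*u" "0 \<le> k^2*u" using k u by simp_all
  have e1: "e \<le> 1" using k u by (simp add: e_def)
  have ue: "u * e \<le> 2/k" using ue_bound[OF k u] by (simp add: e_def)
  have ee: "exp (-k*u) = e * e"
  proof -
    have a: "-(k/2)*u + -(k/2)*u = -k*u" by (simp add: field_simps)
    show ?thesis unfolding e_def exp_add[symmetric] a by (rule refl)
  qed
  have K: "Kf k u = (u*e) * e" unfolding Kf_def ee by simp
  have K0: "0 \<le> Kf k u" using u e0 by (simp add: K)
  have Kb: "Kf k u \<le> (2/k) * e" unfolding K using ue e0 by (intro mult_right_mono) auto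
  have K1b: "\<bar>K1f k u\<bar> \<le> 3 * e"
  proof -
    have "\<bar>K1f k u\<bar> = \<bar>1 - k*u\<bar> * (e*e)" unfolding K1f_def ee by (simp add: abs_mult)
    also have "\<dots> \<le> (1 + k*u) * (e*e)"
    proof (rule mult_right_mono)
      show "\<bar>1 - k*u\<bar> \<le> 1 + k*u" using ku by arith
    qed (use e0 in simp)
    also have "\<dots> = e * e + k * (u * e) * e" by (simp add: algebra_simps)
    also have "\<dots> \<le> e + k * (2/k) * e"
    proof (rule add_mono)
      show "e * e \<le> e" using e0 e1 by (simp add: mult_le_cancel_right1)
      show "k * (u * e) * e \<le> k * (2/k) * e"
        using ue k e0 by (intro mult_right_mono mult_left_mono) auto
    qed
    also have "\<dots> = 3 * e" using k by simp
    finally show ?thesis .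
  qed
  have K2b: "\<bar>K2f k u\<bar> \<le> 4 * k * e"
  proof -
    have "\<bar>K2f k u\<bar> = \<bar>k^2*u - 2*k\<bar> * (e*e)" unfolding K2f_def ee by (simp add: abs_mult)
    also have "\<dots> \<le> (k^2*u + 2*k) * (e*e)"
    proof (rule mult_right_mono)
      show "\<bar>k^2*u - 2*k\<bar> \<le> k^2*u + 2*k" using ku k by arith
    qed (use e0 in simp)
    also have "\<dots> = k * k * (u * e) * e + 2 * k * (e * e)" by (simp add: algebra_simps power2_eq_square)
    also have "\<dots> \<le> k * k * (2/k) * e + 2 * k * e"
    proof (rule add_mono)
      show "2 * k * (e * e) \<le> 2 * k * e" using e0 e1 k by (intro mult_left_mono) (auto simp: mult_le_cancel_right1)
      show "k * k * (u * e) * e \<le> k * k * (2/k) * e"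
        using ue k e0 by (intro mult_right_mono mult_left_mono) auto
    qed
    also have "\<dots> = 4 * k * e" using k by simp
    finally show ?thesis .
  qed
  have t1: "\<bar>K1f k u * p s\<bar> = \<bar>K1f k u\<bar> * p s" using ps by (simp add: abs_mult)
  have t2: "\<bar>Kf k u * p' s\<bar> = Kf k u * (- p' s)" using K0 p's by (simp add: abs_mult)
  have t3: "\<bar>k * Kf k u\<bar> = k * Kf k u" using k K0 by simp
  have "\<bar>Wf k p p' t s\<bar> \<le> \<bar>K2f k u\<bar> + \<bar>K1f k u\<bar> * p s + Kf k u * (- p' s) + k * Kf k u"
    unfolding Wf_def u_def[symmetric] using t1 t2 t3 by arith
  also have "\<dots> \<le> 4 * k * e + 3 * e * Pm + (2/k) * e * (- p' s) + k * ((2/k) * e)"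
  proof -
    have "\<bar>K1f k u\<bar> * p s \<le> 3 * e * Pm" using K1b ps e0 by (intro mult_mono) auto
    moreover have "Kf k u * (- p' s) \<le> (2/k) * e * (- p' s)" using Kb p's by (intro mult_right_mono) auto
    moreover have "k * Kf k u \<le> k * ((2/k) * e)" using Kb k by (intro mult_left_mono) auto
    ultimately show ?thesis using K2b by linarith
  qed
  also have "\<dots> = (4*k + 3*Pm + 2) * e + (2/k) * e * (- p' s)" using k by (simp add: algebra_simps)
  also have "\<dots> \<le> (4*k + 3*Pm + 2 + 2/k) * e * (1 - p' s)"
  proof -
    have Pm: "Pm > 0" using ps by simp
    have "(4*k + 3*Pm + 2 + 2/k) * e * (1 - p' s) = (4*k + 3*Pm + 2 + 2/k) * e + (4*k + 3*Pm + 2) * e * (- p' s) + (2/k) * e * (- p' s)"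
      using k by (simp add: field_simps)
    moreover have "0 \<le> (4*k + 3*Pm + 2) * e * (- p' s)" using k Pm e0 p's by (intro mult_nonneg_nonneg) auto
    moreover have "(4*k + 3*Pm + 2) * e \<le> (4*k + 3*Pm + 2 + 2/k) * e" using k e0 by (intro mult_right_mono) auto
    ultimately show ?thesis by linarith
  qed
  finally show ?thesis by (simp add: e_def u_def)
qed

lemma D_lim:
  fixes k :: real and p p' x :: "real \<Rightarrow> real"
  assumes k: "k > 0"
    and pd: "\<And>t. t \<ge> 0 \<Longrightarrow> (p has_real_derivative p' t) (at t within {0..})"
    and p'c: "continuous_on {0..} p'"
    and ppos: "\<And>t. t \<ge> 0 \<Longrightarrow> p t > 0" and p'neg: "\<And>t. t \<ge> 0 \<Longrightarrow> p' t < 0"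
    and xc: "continuous_on {0..} x"
    and xl: "(x \<longlongrightarrow> 0) at_top"
  shows "((\<lambda>t. integral {0..t} (\<lambda>s. Wf k p p' t s * x s)) \<longlongrightarrow> 0) at_top"
proof -
  have pd': "(p has_real_derivative p' s) (at s within {a..b})" if "0 \<le> a" "s \<in> {a..b}" for a b s
    using that by (intro DERIV_subset[OF pd]) auto
  have pc: "continuous_on {0..} p" by (rule DERIV_continuous_on[OF pd]) auto
  have FTCp: "(p' has_integral p b - p a) {a..b}" if "0 \<le> a" "a \<le> b" for a b
    using that by (intro fundamental_theorem_of_calculus vd_within pd') auto
  define P0 where "P0 = p 0"
  have P0pos: "P0 > 0" using ppos by (simp add: P0_def)
  have pP0: "p s \<le> P0" if "s \<ge> 0" for s
  proof -
    have "p s - p 0 \<le> 0"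
      using has_integral_le[OF FTCp[of 0 s] has_integral_0] that p'neg by force
    then show ?thesis by (simp add: P0_def)
  qed
  define C where "C = 4*k + 3*P0 + 2 + 2/k"
  have Cpos: "C > 0"
  proof -
    have "2/k > 0" using k by simp
    then show ?thesis using k P0pos unfolding C_def by linarith
  qed
  show ?thesis
    unfolding tendsto_iff
  proof (intro allI impI)
    fix \<epsilon> :: real assume eps: "\<epsilon> > 0"
    define \<epsilon>' where "\<epsilon>' = \<epsilon> / (2 * C * (2/k + P0))"
    have kp: "2/k + P0 > 0" using k P0pos by (simp add: add_pos_pos)
    have eps': "\<epsilon>' > 0" using eps Cpos kp unfolding \<epsilon>'_def by (intro divide_pos_pos mult_pos_pos) auto
    have Ceps: "C * \<epsilon>' * (2/k + P0) = \<epsilon>/2"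
    proof -
      have gen: "C * (\<epsilon> / (2*C*Q)) * Q = \<epsilon>/2" if "C \<noteq> 0" "Q \<noteq> 0" for Q
        using that by (simp add: field_simps)
      show ?thesis unfolding \<epsilon>'_def using gen[of "2/k + P0"] Cpos kp by simp
    qed
    obtain S0 where S0: "\<And>s. s \<ge> S0 \<Longrightarrow> \<bar>x s\<bar> < \<epsilon>'"
      using xl eps' unfolding tendsto_iff eventually_at_top_linorder by (auto simp: dist_real_def)
    define S where "S = max S0 0"
    obtain B where B: "B > 0" "\<And>s. s \<in> {0..S} \<Longrightarrow> \<bar>x s\<bar> \<le> B"
    proof -
      have "bounded (x ` {0..S})"
        by (intro compact_imp_bounded compact_continuous_image continuous_on_subset[OF xc]) auto
      then show ?thesis using that by (auto simp: bounded_pos)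
    qed
    define B' where "B' = B * exp ((k/2)*S)"
    have B'pos: "B' > 0" using B by (simp add: B'_def)
    have xb: "\<bar>x s\<bar> \<le> \<epsilon>' + B' * exp (-(k/2)* s)" if "s \<ge> 0" for s
    proof (cases "s \<ge> S")
      case True
      then have "\<bar>x s\<bar> < \<epsilon>'" using S0 by (simp add: S_def)
      moreover have "0 \<le> B' * exp (-(k/2)* s)" using B'pos by simp
      ultimately show ?thesis by linarith
    next
      case False
      then have "\<bar>x s\<bar> \<le> B" using B that by auto
      also have "B = B * exp ((k/2)*S) * exp (-(k/2)*S)" by (simp flip: exp_add)
      also have "\<dots> \<le> B' * exp (-(k/2)* s)"
        unfolding B'_def using False k B by (intro mult_left_mono) auto
      finally show ?thesis using eps' by linarith
    qed
    define E where "E t = \<epsilon>/2 + C * B' * (exp (-(k/2)*t) * (t + P0))" for t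
    have Dle: "\<bar>integral {0..t} (\<lambda>s. Wf k p p' t s * x s)\<bar> \<le> E t" if t: "t \<ge> 0" for t
    proof -
      define h where "h s = C*\<epsilon>'*(exp (-(k/2)*(t-s)) - p' s) + C*B'*exp (-(k/2)*t)*(1 - p' s)" for s
      define H where "H s = C*\<epsilon>'*((2/k)*exp (-(k/2)*(t-s)) - p s) + C*B'*exp (-(k/2)*t)*(s - p s)" for s
      have pcs: "continuous_on {0..t} p" "continuous_on {0..t} p'" "continuous_on {0..t} x"
        by (auto intro: continuous_on_subset[OF pc] continuous_on_subset[OF p'c] continuous_on_subset[OF xc])
      have Wint: "(\<lambda>s. Wf k p p' t s * x s) integrable_on {0..t}"
        unfolding Wf_def by (intro integrable_continuous_real continuous_intros pcs)
      have hint: "(h has_integral H t - H 0) {0..t}"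
      proof (rule fundamental_theorem_of_calculus[OF t], rule vd_within)
        fix s assume s: "s \<in> {0..t}"
        have "(H has_real_derivative C*\<epsilon>'*((2/k)*(exp (-(k/2)*(t-s)) * (k/2)) - p' s) + C*B'*exp (-(k/2)*t)*(1 - p' s)) (at s within {0..t})"
          unfolding H_def using s
          by (auto intro!: derivative_eq_intros pd'[of 0] simp: algebra_simps)
        then show "(H has_real_derivative h s) (at s within {0..t})"
          by (rule DERIV_cong) (use k in \<open>simp add: h_def field_simps\<close>)
      qed
      have pw: "norm (Wf k p p' t s * x s) \<le> h s" if s: "s \<in> {0..t}" for s
      proof -
        define e where "e = exp (-(k/2)*(t-s))"
        have e0: "0 < e" and e1: "e \<le> 1" using s k by (auto simp: e_def)
        have es: "e * exp (-(k/2)* s) = exp (-(k/2)*t)"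
          unfolding e_def exp_add[symmetric] by (simp add: algebra_simps)
        have ps: "0 < p s" "p s \<le> P0" "p' s < 0" using s ppos pP0 p'neg by auto
        have "norm (Wf k p p' t s * x s) = \<bar>Wf k p p' t s\<bar> * \<bar>x s\<bar>" by (simp add: abs_mult)
        also have "\<dots> \<le> (C * e * (1 - p' s)) * (\<epsilon>' + B' * exp (-(k/2)* s))"
          using W_bound[where k=k and s=s and t=t and p=p and Pm=P0 and p'=p'] k ps xb[of s] s
          by (intro mult_mono) (auto simp: C_def e_def)
        also have "\<dots> = C * \<epsilon>' * (e * (1 - p' s)) + C * B' * (e * exp (-(k/2)* s)) * (1 - p' s)"
          by (simp add: algebra_simps)
        also have "\<dots> \<le> C * \<epsilon>' * (e - p' s) + C * B' * exp (-(k/2)*t) * (1 - p' s)"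
        proof -
          have "e * (1 - p' s) \<le> e - p' s"
          proof -
            have "e * (- p' s) \<le> 1 * (- p' s)" using e1 ps by (intro mult_right_mono) auto
            then show ?thesis by (simp add: algebra_simps)
          qed
          then have "C * \<epsilon>' * (e * (1 - p' s)) \<le> C * \<epsilon>' * (e - p' s)"
            using Cpos eps' by (intro mult_left_mono) auto
          then show ?thesis unfolding es by linarith
        qed
        also have "\<dots> = h s" by (simp add: h_def e_def)
        finally show ?thesis .
      qed
      have "\<bar>integral {0..t} (\<lambda>s. Wf k p p' t s * x s)\<bar> \<le> integral {0..t} h"
        using integral_norm_bound_integral[OF Wint has_integral_integrable[OF hint] pw] by simp
      also have "integral {0..t} h = H t - H 0" using hint by (rule integral_unique)
      also have "\<dots> \<le> E t"
      proof -
        have pt: "0 < p t" using ppos t by simp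
        have ex: "0 < exp (-(k/2)*t)" by simp
        have "H t - H 0 = C*\<epsilon>'*(2/k - (2/k)*exp (-(k/2)*t) - p t + P0) + C*B'*(exp (-(k/2)*t)*(t - p t + P0))"
          by (simp add: H_def P0_def algebra_simps)
        also have "\<dots> \<le> C*\<epsilon>'*(2/k + P0) + C*B'*(exp (-(k/2)*t)*(t + P0))"
        proof (rule add_mono)
          show "C*\<epsilon>'*(2/k - (2/k)*exp (-(k/2)*t) - p t + P0) \<le> C*\<epsilon>'*(2/k + P0)"
          proof (rule mult_left_mono)
            have "0 \<le> (2/k)*exp (-(k/2)*t)" using k by simp
            then show "2/k - (2/k)*exp (-(k/2)*t) - p t + P0 \<le> 2/k + P0" using pt by linarith
          qed (use Cpos eps' in simp)
          show "C*B'*(exp (-(k/2)*t)*(t - p t + P0)) \<le> C*B'*(exp (-(k/2)*t)*(t + P0))"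
            using Cpos B'pos pt ex by (intro mult_left_mono) auto
        qed
        finally show ?thesis by (simp add: E_def Ceps)
      qed
      finally show ?thesis .
    qed
    have lim0: "((\<lambda>t. C * B' * (exp (-(k/2)*t) * (t + P0))) \<longlongrightarrow> C * B' * 0) at_top"
      by (intro tendsto_mult_left) (use k in real_asymp)
    have ev1: "eventually (\<lambda>t. C * B' * (exp (-(k/2)*t) * (t + P0)) < \<epsilon>/2) at_top"
      using order_tendstoD(2)[OF lim0, of "\<epsilon>/2"] eps by simp
    show "eventually (\<lambda>t. dist (integral {0..t} (\<lambda>s. Wf k p p' t s * x s)) 0 < \<epsilon>) at_top"
      using ev1 eventually_ge_at_top[of 0]
    proof eventually_elim
      case (elim t)
      then show ?case using Dle[of t] by (simp add: E_def dist_real_def)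
    qed
  qed
qed


theorem mainTheorem14:
  fixes \<omega> :: real and p p' f x x' :: "real \<Rightarrow> real"
  assumes omega_pos: "\<omega> > 0"
    and p_deriv: "\<And>t. t \<ge> 0 \<Longrightarrow> (p has_real_derivative p' t) (at t within {0..})"
    and p'_cont: "continuous_on {0..} p'"
    and p_pos: "\<And>t. t \<ge> 0 \<Longrightarrow> p t > 0"
    and p'_neg: "\<And>t. t \<ge> 0 \<Longrightarrow> p' t < 0"
    and p_int_div: "filterlim (\<lambda>T. integral {0..T} p) at_top at_top"
    and p_sq_int: "(\<lambda>t. (p t)\<^sup>2) integrable_on {0..}"
    and f_loc: "\<And>T. f absolutely_integrable_on {0..T}"
    and x_deriv: "\<And>t. t \<ge> 0 \<Longrightarrow> (x has_real_derivative x' t) (at t within {0..})"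
    and x'_cont: "continuous_on {0..} x'"
    and x_eq: "\<And>t. t \<ge> 0 \<Longrightarrow>
        ((\<lambda>s. f s - p s * x' s - \<omega>\<^sup>2 * x s) has_integral (x' t - x' 0)) {0..t}"
    and x0: "x 0 = 0" and x'0: "x' 0 = 0"
    and x_lim: "(x \<longlongrightarrow> 0) at_top"
  shows "(y2 \<omega> f \<longlongrightarrow> 0) at_top"
proof -
  define k where "k = \<omega>\<^sup>2"
  have k: "k > 0" using omega_pos by (simp add: k_def)
  have xc: "continuous_on {0..} x" by (rule DERIV_continuous_on[OF x_deriv]) auto
  have D: "((\<lambda>t. integral {0..t} (\<lambda>s. Wf k p p' t s * x s)) \<longlongrightarrow> 0) at_top"
    by (rule D_lim[OF k p_deriv p'_cont p_pos p'_neg xc x_lim]) auto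
  have eq: "y2 \<omega> f t = x t + integral {0..t} (\<lambda>s. Wf k p p' t s * x s)" if t: "t \<ge> 0" for t
  proof -
    have "((\<lambda>s. Kf k (t-s) * f s) has_integral x t + integral {0..t} (\<lambda>s. Wf k p p' t s * x s)) {0..t}"
    proof (rule rep[OF t])
      show "(p has_real_derivative p' s) (at s within {0..t})" if "s \<in> {0..t}" for s
        using that by (intro DERIV_subset[OF p_deriv]) auto
      show "continuous_on {0..t} p'" by (rule continuous_on_subset[OF p'_cont]) auto
      show "(x has_real_derivative x' s) (at s within {0..t})" if "s \<in> {0..t}" for s
        using that by (intro DERIV_subset[OF x_deriv]) auto
      show "continuous_on {0..t} x'" by (rule continuous_on_subset[OF x'_cont]) auto
      show "f absolutely_integrable_on {0..t}" by (rule f_loc)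
      show "((\<lambda>s. f s - p s * x' s - k * x s) has_integral x' u) {0..u}" if "u \<in> {0..t}" for u
        using x_eq[of u] that x'0 by (simp add: k_def)
      show "x 0 = 0" by (rule x0)
    qed
    then show ?thesis
      unfolding y2_def Kf_def k_def by (simp add: integral_unique)
  qed
  have "((\<lambda>t. x t + integral {0..t} (\<lambda>s. Wf k p p' t s * x s)) \<longlongrightarrow> 0 + 0) at_top"
    by (intro tendsto_add x_lim D)
  then have "((\<lambda>t. x t + integral {0..t} (\<lambda>s. Wf k p p' t s * x s)) \<longlongrightarrow> 0) at_top" by simp
  then show ?thesis
  proof (rule Lim_transform_eventually)
    show "\<forall>\<^sub>F t in at_top. x t + integral {0..t} (\<lambda>s. Wf k p p' t s * x s) = y2 \<omega> f t"
      using eventually_ge_at_top[of 0] by eventually_elim (simp add: eq)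
  qed
qed

end
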